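(* Let $X\in\mathbb{C}$ be an imaginary quadratic algebraic number such that $X$ is an $\mathbb{S}[\pm1]$-generator of the subring $\mathbb{Z}[X]\subset\mathbb{C}$, i.e. every element of $\mathbb{Z}[X]$ can be written uniquely as a finite sum $\sum_j\alpha_jX^j$ with $\alpha_j\in\{-1,0,1\}$. Then $\mathbb{Q}(X)$ is one of $\mathbb{Q}(\sqrt{-2})$, $\mathbb{Q}(\sqrt{-3})$, $\mathbb{Q}(\sqrt{-11})$. Moreover all three occur: $1+\sqrt{-2}$ is an $\mathbb{S}[\pm1]$-generator of $\mathbb{Z}[\sqrt{-2}]$ (the ring of integers of $\mathbb{Q}(\sqrt{-2})$), $\sqrt{-3}$ is an $\mathbb{S}[\pm1]$-generator of $\mathbb{Z}[\sqrt{-3}]$, and $\frac12(1+\sqrt{-11})$ is an $\mathbb{S}[\pm1]$-generator of the ring of integers of $\mathbb{Q}(\sqrt{-11})$.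
   Context: $\mathbb{S}[\pm1]=\mathbb{S}[\mu_{2,+}]$ with $\mu_2=\{\pm1\}$; an $\mathbb{S}[\pm1]$-generator of a ring $A\supset\{\pm1\}$ is $X\in A$ such that each element of $A$ is uniquely a finite sum $\sum_j\alpha_jX^j$, $\alpha_j\in\{-1,0,1\}$. *)

theory Defs
  imports "HOL-Complex_Analysis.Complex_Analysis" "HOL-Computational_Algebra.Polynomial"
begin

definition zring :: "complex \<Rightarrow> complex set" where
  "zring x = {poly (map_poly of_int p) x | p :: int poly. True}"

definition qfield :: "complex \<Rightarrow> complex set" where
  "qfield x = {poly (map_poly of_rat p) x / poly (map_poly of_rat q) x
                 | p q :: rat poly. poly (map_poly of_rat q) x \<noteq> 0}"

definition spm1_generator :: "complex \<Rightarrow> bool" where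
  "spm1_generator x \<longleftrightarrow>
     (\<forall>z \<in> zring x. \<exists>!p :: int poly. (\<forall>j. coeff p j \<in> {-1, 0, 1}) \<and> poly (map_poly of_int p) x = z)"

definition imag_quadratic :: "complex \<Rightarrow> bool" where
  "imag_quadratic x \<longleftrightarrow> x \<notin> \<real> \<and>
     (\<exists>p :: rat poly. degree p = 2 \<and> poly (map_poly of_rat p) x = 0)"

end

theory Submission
  imports Defs
begin


lemma of_rat_complex: "(of_rat r :: complex) = complex_of_real (of_rat r)"
  by (cases r) (simp add: of_rat_rat)

lemma map_poly_add_hom:
  assumes "f 0 = 0" "\<And>a b. f (a + b) = f a + f b"
  shows "map_poly f (p + q) = map_poly f p + map_poly f q"
  by (intro poly_eqI) (simp add: coeff_map_poly assms)

lemma map_poly_mult_hom: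
  assumes f0: "f 0 = 0" and fa: "\<And>a b. f (a + b) = f a + f b" and fm: "\<And>a b. f (a * b) = f a * f b"
  shows "map_poly f (p * q) = map_poly f p * map_poly f q"
proof (induction p rule: pCons_induct)
  case 0
  then show ?case by simp
next
  case (pCons a p)
  have "map_poly f (pCons a p * q) = map_poly f (smult a q) + map_poly f (pCons 0 (p * q))"
    by (simp add: map_poly_add_hom f0 fa)
  also have "\<dots> = smult (f a) (map_poly f q) + pCons 0 (map_poly f p * map_poly f q)"
    using pCons by (simp add: map_poly_smult map_poly_pCons f0 fm)
  also have "\<dots> = map_poly f (pCons a p) * map_poly f q"
    by (simp add: map_poly_pCons f0)
  finally show ?case .
qed

lemma of_int_poly_mult: "map_poly (of_int :: int \<Rightarrow> 'a::comm_ring_1) (p * q) = map_poly of_int p * map_poly of_int q"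
  by (rule map_poly_mult_hom) auto

lemma of_rat_poly_mult: "map_poly (of_rat :: rat \<Rightarrow> 'a::field_char_0) (p * q) = map_poly of_rat p * map_poly of_rat q"
  by (rule map_poly_mult_hom) (auto simp: of_rat_add of_rat_mult)

lemma of_rat_poly_add: "map_poly (of_rat :: rat \<Rightarrow> 'a::field_char_0) (p + q) = map_poly of_rat p + map_poly of_rat q"
  by (rule map_poly_add_hom) (auto simp: of_rat_add)

lemma common_denom:
  fixes g :: "rat poly"
  shows "\<exists>G :: int poly. \<exists>D :: int. D > 0 \<and> map_poly of_int G = smult (of_int D) g"
proof (induction g rule: pCons_induct)
  case 0
  show ?case by (rule exI[of _ 0], rule exI[of _ 1]) simp
next
  case (pCons c g)
  then obtain G D where GD: "D > 0" "map_poly of_int G = smult (of_int D) g" by blast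
  obtain a b where ab: "quotient_of c = (a, b)" by (cases "quotient_of c")
  have c: "c = of_int a / of_int b" using quotient_of_div[OF ab] .
  have b: "b > 0" using quotient_of_denom_pos[OF ab] .
  have "map_poly of_int (pCons (a * D) (smult b G)) = smult (of_int (D * b)) (pCons c g)"
    using GD b by (simp add: map_poly_pCons map_poly_smult c mult_ac)
  then show ?case using GD b by (intro exI[of _ "pCons (a * D) (smult b G)"] exI[of _ "D * b"]) simp
qed


lemma of_int_poly_inj: "map_poly (of_int :: int \<Rightarrow> rat) p = map_poly of_int q \<Longrightarrow> p = q"
  by (simp add: poly_eq_iff coeff_map_poly)

lemma content_nonneg_int: "content (p :: int poly) \<ge> 0"
proof -
  have "normalize (content p) = content p" by (rule normalize_content)
  moreover have "normalize (content p) = \<bar>content p\<bar>" by simp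
  ultimately show ?thesis by (metis abs_ge_zero)
qed

lemma gauss_monic:
  fixes g h :: "rat poly" and f :: "int poly"
  assumes fgh: "map_poly of_int f = g * h" and lg: "lead_coeff g = 1"
    and lf: "lead_coeff f = 1 \<or> lead_coeff f = -1"
  shows "coeff g i \<in> \<int>"
proof -
  obtain G D where GD: "D > 0" "map_poly of_int G = smult (of_int D) g" using common_denom by blast
  obtain H E where HE: "E > 0" "map_poly of_int H = smult (of_int E) h" using common_denom by blast
  have lf': "lead_coeff (map_poly (of_int :: int \<Rightarrow> rat) f) = of_int (lead_coeff f)"
    by (simp add: degree_map_poly coeff_map_poly)
  have lh: "lead_coeff h = 1 \<or> lead_coeff h = -1"
    using lf lf' fgh lg by (auto simp: lead_coeff_mult)
  have "map_poly of_int (G * H) = smult (of_int (D * E)) (map_poly (of_int :: int \<Rightarrow> rat) f)"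
    by (simp add: of_int_poly_mult GD HE fgh mult_ac)
  also have "\<dots> = map_poly of_int (smult (D * E) f)"
    by (simp add: map_poly_smult)
  finally have GH: "G * H = smult (D * E) f" by (rule of_int_poly_inj)
  have cf: "content f = 1"
  proof -
    have u: "is_unit (lead_coeff f)" using lf by auto
    have "is_unit (content f)" by (rule dvd_unit_imp_unit[OF content_dvd_coeff u])
    then have "\<bar>content f\<bar> = 1" by simp
    then show ?thesis using content_nonneg_int[of f] by linarith
  qed
  have cGH: "content G * content H = D * E"
    using arg_cong[OF GH, of content] GD HE cf by (simp add: content_mult abs_mult)
  have cG: "coeff G (degree g) = D"
  proof -
    have "(of_int (coeff G (degree g)) :: rat) = coeff (map_poly of_int G) (degree g)"
      by (simp add: coeff_map_poly)
    also have "\<dots> = of_int D" using GD lg by simp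
    finally show ?thesis by simp
  qed
  have cH: "coeff H (degree h) = E \<or> coeff H (degree h) = - E"
  proof -
    have "(of_int (coeff H (degree h)) :: rat) = coeff (map_poly of_int H) (degree h)"
      by (simp add: coeff_map_poly)
    also have "\<dots> = of_int E * lead_coeff h" using HE by simp
    finally show ?thesis using lh by auto
  qed
  have G0: "G \<noteq> 0" using cG GD by auto
  have H0: "H \<noteq> 0" using cH HE by auto
  have pG: "content G > 0" using G0 content_nonneg_int[of G] content_eq_zero_iff[of G] by linarith
  have pH: "content H > 0" using H0 content_nonneg_int[of H] content_eq_zero_iff[of H] by linarith
  have "content G dvd D" using content_dvd_coeff[of G "degree g"] cG by simp
  then have leG: "content G \<le> D" using GD(1) by (simp add: zdvd_imp_le)
  have "content H dvd E" using content_dvd_coeff[of H "degree h"] cH by (metis dvd_minus_iff)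
  then have leH: "content H \<le> E" using HE(1) by (simp add: zdvd_imp_le)
  have eqD: "content G = D"
  proof (rule ccontr)
    assume "content G \<noteq> D"
    then have "content G < D" using leG by simp
    then have "content G * content H < D * content H" using pH by simp
    also have "\<dots> \<le> D * E" using leH GD(1) by simp
    finally show False using cGH by simp
  qed
  have "D dvd coeff G i" using content_dvd_coeff[of G i] eqD by simp
  then obtain k where k: "coeff G i = D * k" by (auto simp: dvd_def)
  have "of_int D * coeff g i = (of_int (coeff G i) :: rat)"
    using arg_cong[OF GD(2), of "\<lambda>p. coeff p i"] by (simp add: coeff_map_poly)
  also have "\<dots> = of_int D * of_int k" using k by simp
  finally have "coeff g i = of_int k" using GD(1) by simp
  then show ?thesis by simp
qed



lemma poly_of_rat_of_int:
  "poly (map_poly (of_rat :: rat \<Rightarrow> complex) (map_poly of_int f)) z = poly (map_poly of_int f) z"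
  by (simp add: map_poly_map_poly o_def)

lemma deg1_root:
  fixes r :: "rat poly" and z :: complex
  assumes "z \<notin> \<real>" "degree r < 2" "poly (map_poly of_rat r) z = 0"
  shows "r = 0"
proof -
  have r: "r = pCons (coeff r 0) [:coeff r 1:]"
    using assms(2) by (auto simp: poly_eq_iff coeff_pCons coeff_eq_0 split: nat.splits)
  have "poly (map_poly of_rat r) z = of_rat (coeff r 0) + z * of_rat (coeff r 1)"
    by (subst r) (simp add: map_poly_pCons)
  with assms(3) have e: "of_rat (coeff r 0) + z * of_rat (coeff r 1) = (0::complex)" by simp
  have "Im z \<noteq> 0" using assms(1) complex_is_Real_iff by blast
  from arg_cong[OF e, of Im] have "Im z * of_rat (coeff r 1) = 0" by (simp add: of_rat_complex)
  with \<open>Im z \<noteq> 0\<close> have c1: "coeff r 1 = 0" by simp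
  with e have "coeff r 0 = 0" by simp
  with c1 r show ?thesis by simp
qed

lemma quad_int:
  fixes z :: complex and \<sigma> \<nu> :: rat and f :: "int poly"
  assumes nr: "z \<notin> \<real>" and eq: "z^2 = of_rat \<sigma> * z - of_rat \<nu>"
    and fz: "poly (map_poly of_int f) z = 0" and lf: "lead_coeff f = 1 \<or> lead_coeff f = -1"
  shows "\<sigma> \<in> \<int> \<and> \<nu> \<in> \<int>"
proof -
  define g :: "rat poly" where "g = [:\<nu>, -\<sigma>, 1:]"
  define F :: "rat poly" where "F = map_poly of_int f"
  have g0: "g \<noteq> 0" and dg: "degree g = 2" and lg: "lead_coeff g = 1" by (simp_all add: g_def)
  have Fdec: "F = g * (F div g) + F mod g" by simp
  have evg: "poly (map_poly (of_rat :: rat \<Rightarrow> complex) g) z = 0"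
    using eq by (simp add: g_def map_poly_pCons of_rat_minus power2_eq_square algebra_simps)
  have evF: "poly (map_poly (of_rat :: rat \<Rightarrow> complex) F) z = 0"
    using fz by (simp add: F_def poly_of_rat_of_int)
  have "poly (map_poly (of_rat :: rat \<Rightarrow> complex) (g * (F div g) + F mod g)) z =
        poly (map_poly of_rat g) z * poly (map_poly of_rat (F div g)) z + poly (map_poly of_rat (F mod g)) z"
    by (simp only: of_rat_poly_add of_rat_poly_mult poly_add poly_mult)
  with evg evF Fdec have evr: "poly (map_poly (of_rat :: rat \<Rightarrow> complex) (F mod g)) z = 0" by simp
  have "F mod g = 0"
  proof (rule ccontr)
    assume "F mod g \<noteq> 0"
    then have "degree (F mod g) < 2" using degree_mod_less'[OF g0] dg by simp
    then show False using deg1_root[OF nr _ evr] \<open>F mod g \<noteq> 0\<close> by simp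
  qed
  then have "map_poly of_int f = g * (F div g)" using Fdec F_def by simp
  from gauss_monic[OF this lg lf] have "coeff g 0 \<in> \<int>" "coeff g 1 \<in> \<int>" by auto
  then show ?thesis by (simp add: g_def)
qed



lemma zring_elem:
  fixes X :: complex
  assumes eq: "X^2 = of_int s * X - of_int n"
  shows "\<exists>a b. poly (map_poly of_int p) X = of_int a + of_int b * X"
proof (induction p rule: pCons_induct)
  case 0
  show ?case by (rule exI[of _ 0], rule exI[of _ 0]) simp
next
  case (pCons c p)
  then obtain a b where ab: "poly (map_poly of_int p) X = of_int a + of_int b * X" by blast
  have "poly (map_poly of_int (pCons c p)) X = of_int c + X * (of_int a + of_int b * X)"
    by (simp add: map_poly_pCons ab)
  also have "\<dots> = of_int c + of_int a * X + of_int b * X^2" by (simp add: algebra_simps power2_eq_square)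
  also have "\<dots> = of_int (c - b * n) + of_int (a + b * s) * X" by (simp add: eq algebra_simps)
  finally show ?case by blast
qed

lemma zring_eq:
  fixes X :: complex
  assumes eq: "X^2 = of_int s * X - of_int n"
  shows "zring X = {of_int a + of_int b * X | a b. True}"
proof
  show "zring X \<subseteq> {of_int a + of_int b * X | a b. True}"
    using zring_elem[OF eq] unfolding zring_def by blast
  show "{of_int a + of_int b * X | a b. True} \<subseteq> zring X"
  proof
    fix z assume "z \<in> {of_int a + of_int b * X | a b. True}"
    then obtain a b where z: "z = of_int a + of_int b * X" by blast
    have "poly (map_poly of_int [:a, b:]) X = z" by (simp add: map_poly_pCons z algebra_simps)
    then show "z \<in> zring X" unfolding zring_def by blast
  qed
qed

lemma divlem:
  fixes X :: complex
  assumes nr: "X \<notin> \<real>" and eq: "X^2 = of_int s * X - of_int n"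
    and m: "of_int m = X * (of_int a + of_int b * X)"
  shows "m = - n * b"
proof -
  have "X * (of_int a + of_int b * X) = of_int a * X + of_int b * X^2" by (simp add: algebra_simps power2_eq_square)
  also have "\<dots> = of_int (- n * b) + of_int (a + b * s) * X" by (simp add: eq algebra_simps)
  finally have e: "(of_int m :: complex) = of_int (- n * b) + of_int (a + b * s) * X" using m by simp
  have "Im X \<noteq> 0" using nr complex_is_Real_iff by blast
  from arg_cong[OF e, of Im] have "real_of_int (a + b * s) * Im X = 0" by (simp del: of_int_add of_int_mult)
  with \<open>Im X \<noteq> 0\<close> have "a + b * s = 0" by (simp del: of_int_add of_int_mult)
  with e have "(of_int m :: complex) = of_int (- n * b)" by simp
  then show ?thesis by (simp only: of_int_eq_iff)
qed

definition digitp :: "int poly \<Rightarrow> bool" where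
  "digitp p \<longleftrightarrow> (\<forall>j. coeff p j \<in> {-1, 0, 1})"

lemma digit_head:
  fixes X :: complex
  assumes nr: "X \<notin> \<real>" and eq: "X^2 = of_int s * X - 3"
    and dp: "digitp (pCons p0 p')" and dq: "digitp (pCons q0 q')"
    and e: "poly (map_poly of_int (pCons p0 p')) X = poly (map_poly of_int (pCons q0 q')) X"
  shows "p0 = q0 \<and> poly (map_poly of_int p') X = poly (map_poly of_int q') X"
proof -
  have eq': "X^2 = of_int s * X - of_int 3" using eq by simp
  obtain a1 b1 where 1: "poly (map_poly of_int p') X = of_int a1 + of_int b1 * X" using zring_elem[OF eq'] by blast
  obtain a2 b2 where 2: "poly (map_poly of_int q') X = of_int a2 + of_int b2 * X" using zring_elem[OF eq'] by blast
  from e have "of_int p0 + X * (of_int a1 + of_int b1 * X) = of_int q0 + X * (of_int a2 + of_int b2 * X)"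
    by (simp add: map_poly_pCons 1 2)
  then have "of_int (p0 - q0) = X * (of_int (a2 - a1) + of_int (b2 - b1) * X)"
    by (simp add: algebra_simps)
  from divlem[OF nr eq' this] have m: "p0 - q0 = - 3 * (b2 - b1)" .
  have "p0 \<in> {-1,0,1}" "q0 \<in> {-1,0,1}" using dp dq unfolding digitp_def
    by (metis coeff_pCons_0)+
  with m have "p0 = q0" by (auto; presburger)
  moreover have "X \<noteq> 0" using nr by auto
  ultimately show ?thesis using e by (simp add: map_poly_pCons)
qed

lemma digitp_tail: "digitp (pCons a p) \<Longrightarrow> digitp p"
  unfolding digitp_def by (metis coeff_pCons_Suc)

lemma digit_unique:
  fixes X :: complex
  assumes nr: "X \<notin> \<real>" and eq: "X^2 = of_int s * X - 3"
  shows "digitp p \<Longrightarrow> digitp q \<Longrightarrow> poly (map_poly of_int p) X = poly (map_poly of_int q) X \<Longrightarrow> coeff p j = coeff q j"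
proof (induction j arbitrary: p q)
  case 0
  obtain p0 p' where p: "p = pCons p0 p'" by (cases p)
  obtain q0 q' where q: "q = pCons q0 q'" by (cases q)
  show ?case using digit_head[OF nr eq, of p0 p' q0 q'] 0 p q by simp
next
  case (Suc j)
  obtain p0 p' where p: "p = pCons p0 p'" by (cases p)
  obtain q0 q' where q: "q = pCons q0 q'" by (cases q)
  have "poly (map_poly of_int p') X = poly (map_poly of_int q') X"
    using digit_head[OF nr eq, of p0 p' q0 q'] Suc.prems p q by simp
  moreover have "digitp p'" "digitp q'" using Suc.prems p q digitp_tail by blast+
  ultimately have "coeff p' j = coeff q' j" using Suc.IH by blast
  then show ?case using p q by simp
qed



lemma aux_ineq:
  fixes t N :: int
  assumes "t^2 \<le> 4*N" "N \<ge> 2"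
  shows "\<bar>t\<bar> + 1 < 2*N"
proof (rule ccontr)
  assume "\<not> \<bar>t\<bar> + 1 < 2*N"
  then have h: "2*N - 1 \<le> \<bar>t\<bar>" by simp
  have "0 \<le> 2*N - 1" using assms by simp
  then have "(2*N-1)^2 \<le> \<bar>t\<bar>^2" using h power_mono by blast
  then have "(2*N-1)^2 \<le> 4*N" using assms(1) by simp
  moreover have "2*N \<le> N*N" using assms(2) by (simp add: mult_right_mono)
  ultimately show False by (simp add: power2_eq_square algebra_simps)
qed

lemma digit_exists:
  fixes X :: complex
  assumes eq: "X^2 = of_int s * X - 3" and sb: "\<bar>s\<bar> \<le> 2"
  shows "\<exists>p. digitp p \<and> poly (map_poly of_int p) X = of_int a + of_int b * X"
proof -
  have "\<forall>a b. nat (a^2 + a*b * s + 3*b^2) = k \<longrightarrow> (\<exists>p. digitp p \<and> poly (map_poly of_int p) X = of_int a + of_int b * X)" for k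
  proof (induction k rule: less_induct)
    case (less k)
    show ?case
    proof (intro allI impI)
      fix a b :: int
      assume Nk: "nat (a^2 + a*b * s + 3*b^2) = k"
      define N where "N = a^2 + a*b * s + 3*b^2"
      define t where "t = 2*a + b * s"
      have N4: "4*N = t^2 + (12 - s^2) * b^2" by (simp add: N_def t_def power2_eq_square algebra_simps)
      have "\<bar>s\<bar>^2 \<le> 2^2" using sb by (intro power_mono) simp_all
      then have s2: "s^2 \<le> 4" by simp
      have "0 \<le> (12 - s^2) * b^2" using s2 by simp
      then have tN: "t^2 \<le> 4*N" using N4 by linarith
      have "8 * b^2 \<le> (12 - s^2) * b^2" using s2 by (intro mult_right_mono) simp_all
      then have bN: "8 * b^2 \<le> 4*N" using N4 by (smt (verit) zero_le_power2)
      show "\<exists>p. digitp p \<and> poly (map_poly of_int p) X = of_int a + of_int b * X"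
      proof (cases "N \<le> 1")
        case True
        then have "b^2 \<le> 0" using bN by linarith
        then have "b^2 = 0" by (simp add: le_antisym)
        then have b0: "b = 0" by simp
        then have "a^2 \<le> 1" using True by (simp add: N_def)
        then have "\<bar>a\<bar> \<le> 1" by (simp add: abs_square_le_1)
        then have "a \<in> {-1,0,1}" by auto
        then have "digitp [:a:]" unfolding digitp_def by (auto simp: coeff_pCons split: nat.splits)
        moreover have "poly (map_poly of_int [:a:]) X = of_int a + of_int b * X" using b0 by (simp add: map_poly_pCons)
        ultimately show ?thesis by blast
      next
        case False
        define d where "d = (a + 1) mod 3 - 1"
        define j where "j = (a + 1) div 3"
        have ad: "a = 3*j + d" unfolding d_def j_def using div_mult_mod_eq[of "a+1" 3] by linarith
        have dd: "d \<in> {-1,0,1}" unfolding d_def by auto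
        define a' where "a' = j * s + b"
        define b' where "b' = -j"
        define N' where "N' = a'^2 + a'*b' * s + 3*b'^2"
        have N'eq: "3 * N' = (a-d)^2 + (a-d)*b * s + 3*b^2"
          by (simp add: N'_def a'_def b'_def ad power2_eq_square algebra_simps)
        have "(a-d)^2 + (a-d)*b * s + 3*b^2 = N - d*t + d^2"
          by (simp add: N_def t_def power2_eq_square algebra_simps)
        moreover have "- d*t + d^2 \<le> \<bar>t\<bar> + 1" using dd by (elim insertE) auto
        moreover have "\<bar>t\<bar> + 1 < 2*N" using aux_ineq[OF tN] False by simp
        ultimately have "N' < N" using N'eq by linarith
        moreover have "N' \<ge> 0"
        proof -
          have "4*N' = (2*a' + b' * s)^2 + (12 - s^2) * b'^2" by (simp add: N'_def power2_eq_square algebra_simps)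
          moreover have "0 \<le> (12 - s^2) * b'^2" using s2 by simp
          moreover have "0 \<le> (2*a' + b' * s)^2" by simp
          ultimately show ?thesis by linarith
        qed
        ultimately have lt: "nat N' < k" using Nk N_def by linarith
        have "nat (a'^2 + a' * b' * s + 3*b'^2) = nat N'" by (simp add: N'_def)
        from less.IH[OF lt, rule_format, OF this] obtain p' where p': "digitp p'" "poly (map_poly of_int p') X = of_int a' + of_int b' * X"
          by blast
        have "digitp (pCons d p')" using p'(1) dd unfolding digitp_def by (auto simp: coeff_pCons split: nat.splits)
        moreover have "poly (map_poly of_int (pCons d p')) X = of_int a + of_int b * X"
        proof -
          have "poly (map_poly of_int (pCons d p')) X = of_int d + X * (of_int a' + of_int b' * X)"
            by (simp add: map_poly_pCons p'(2))
          also have "\<dots> = of_int d + of_int a' * X + of_int b' * X^2" by (simp add: algebra_simps power2_eq_square)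
          also have "\<dots> = of_int a + of_int b * X" by (simp add: eq a'_def b'_def ad algebra_simps)
          finally show ?thesis .
        qed
        ultimately show ?thesis by blast
      qed
    qed
  qed
  then show ?thesis by blast
qed

lemma spm1_of:
  fixes X :: complex
  assumes nr: "X \<notin> \<real>" and eq: "X^2 = of_int s * X - 3" and sb: "\<bar>s\<bar> \<le> 2"
  shows "spm1_generator X"
  unfolding spm1_generator_def
proof
  fix z assume "z \<in> zring X"
  then obtain a b where z: "z = of_int a + of_int b * X"
    using zring_eq[of X s 3] eq by auto
  obtain p where p: "digitp p" "poly (map_poly of_int p) X = z" using digit_exists[OF eq sb] z by blast
  show "\<exists>!p :: int poly. (\<forall>j. coeff p j \<in> {-1, 0, 1}) \<and> poly (map_poly of_int p) X = z"
  proof (rule ex1I[of _ p])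
    show "(\<forall>j. coeff p j \<in> {-1, 0, 1}) \<and> poly (map_poly of_int p) X = z" using p digitp_def by auto
  next
    fix q assume q: "(\<forall>j. coeff q j \<in> {-1, 0, 1}) \<and> poly (map_poly of_int q) X = z"
    then have "coeff q j = coeff p j" for j
      using digit_unique[OF nr eq, of q p j] p unfolding digitp_def by auto
    then show "q = p" by (simp add: poly_eq_iff)
  qed
qed



definition lin :: "complex \<Rightarrow> complex set" where
  "lin X = {of_rat a + of_rat b * X | a b. True}"

lemma lin_poly:
  fixes X :: complex
  assumes eq: "X^2 = of_rat \<sigma> * X - of_rat \<nu>"
  shows "poly (map_poly of_rat p) X \<in> lin X"
proof (induction p rule: pCons_induct)
  case 0
  show ?case unfolding lin_def by (rule CollectI, rule exI[of _ 0], rule exI[of _ 0]) simp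
next
  case (pCons c p)
  then obtain a b where ab: "poly (map_poly of_rat p) X = of_rat a + of_rat b * X" unfolding lin_def by blast
  have "poly (map_poly of_rat (pCons c p)) X = of_rat c + X * (of_rat a + of_rat b * X)"
    by (simp add: map_poly_pCons ab)
  also have "\<dots> = of_rat c + of_rat a * X + of_rat b * X^2" by (simp add: algebra_simps power2_eq_square)
  also have "\<dots> = of_rat (c - b * \<nu>) + of_rat (a + b * \<sigma>) * X" by (simp add: eq algebra_simps of_rat_add of_rat_mult of_rat_diff)
  finally show ?case unfolding lin_def by blast
qed

lemma lin_mult:
  fixes X :: complex
  assumes eq: "X^2 = of_rat \<sigma> * X - of_rat \<nu>" and u: "u \<in> lin X" and v: "v \<in> lin X"
  shows "u * v \<in> lin X"
proof -
  obtain a b where ab: "u = of_rat a + of_rat b * X" using u unfolding lin_def by blast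
  obtain c d where cd: "v = of_rat c + of_rat d * X" using v unfolding lin_def by blast
  have "u * v = of_rat (a*c) + of_rat (a*d + b*c) * X + of_rat (b*d) * X^2"
    by (simp add: ab cd algebra_simps power2_eq_square of_rat_add of_rat_mult)
  also have "\<dots> = of_rat (a*c - b*d*\<nu>) + of_rat (a*d + b*c + b*d*\<sigma>) * X"
    by (simp add: eq algebra_simps of_rat_add of_rat_mult of_rat_diff)
  finally show ?thesis unfolding lin_def by blast
qed

lemma lin_inverse:
  fixes X :: complex
  assumes nr: "X \<notin> \<real>" and eq: "X^2 = of_rat \<sigma> * X - of_rat \<nu>" and v: "v \<in> lin X" and v0: "v \<noteq> 0"
  shows "inverse v \<in> lin X"
proof -
  obtain c d where cd: "v = of_rat c + of_rat d * X" using v unfolding lin_def by blast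
  define w where "w = of_rat (c + d * \<sigma>) - of_rat d * X"
  define Nr where "Nr = c^2 + c*d*\<sigma> + d^2 * \<nu>"
  have vw: "v * w = of_rat Nr"
  proof -
    have "v * w = of_rat (c^2 + c*d*\<sigma>) + of_rat (d^2) * (of_rat \<sigma> * X - X^2)"
      by (simp add: cd w_def algebra_simps power2_eq_square of_rat_add of_rat_mult)
    also have "\<dots> = of_rat Nr" by (simp add: eq Nr_def of_rat_add of_rat_mult)
    finally show ?thesis .
  qed
  have "Im X \<noteq> 0" using nr complex_is_Real_iff by blast
  have Nr0: "Nr \<noteq> 0"
  proof
    assume "Nr = 0"
    then have "w = 0" using vw v0 by simp
    then have e: "of_rat (c + d * \<sigma>) - of_rat d * X = 0" by (simp add: w_def)
    from arg_cong[OF e, of Im] have "of_rat d * Im X = 0" by (simp add: of_rat_complex)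
    with \<open>Im X \<noteq> 0\<close> have "d = 0" by simp
    with e have "c = 0" by simp
    with \<open>d = 0\<close> cd v0 show False by simp
  qed
  have "inverse v = w / of_rat Nr" using vw v0 Nr0 by (simp add: field_simps)
  also have "\<dots> = of_rat ((c + d * \<sigma>) / Nr) + of_rat (- d / Nr) * X"
    by (simp add: w_def of_rat_divide of_rat_minus diff_divide_distrib)
  finally show ?thesis unfolding lin_def by blast
qed

lemma qfield_eq:
  fixes X :: complex
  assumes nr: "X \<notin> \<real>" and eq: "X^2 = of_rat \<sigma> * X - of_rat \<nu>"
  shows "qfield X = lin X"
proof
  show "qfield X \<subseteq> lin X"
  proof
    fix z assume "z \<in> qfield X"
    then obtain p q where z: "z = poly (map_poly of_rat p) X / poly (map_poly of_rat q) X"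
      and q0: "poly (map_poly of_rat q) X \<noteq> 0" unfolding qfield_def by blast
    have "inverse (poly (map_poly of_rat q) X) \<in> lin X"
      by (rule lin_inverse[OF nr eq lin_poly[OF eq] q0])
    from lin_mult[OF eq lin_poly[OF eq, of p] this] show "z \<in> lin X" by (simp add: z divide_inverse)
  qed
  show "lin X \<subseteq> qfield X"
  proof
    fix z assume "z \<in> lin X"
    then obtain a b where z: "z = of_rat a + of_rat b * X" unfolding lin_def by blast
    have "z = poly (map_poly of_rat [:a, b:]) X / poly (map_poly of_rat 1) X"
      by (simp add: z map_poly_pCons algebra_simps)
    moreover have "poly (map_poly (of_rat :: rat \<Rightarrow> complex) 1) X \<noteq> 0" by simp
    ultimately show "z \<in> qfield X" unfolding qfield_def by blast
  qed
qed

lemma lin_change: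
  fixes X Y :: complex
  assumes Y: "Y = of_rat u + of_rat v * X" and v0: "v \<noteq> 0"
  shows "lin Y = lin X"
proof
  show "lin Y \<subseteq> lin X"
  proof
    fix z assume "z \<in> lin Y"
    then obtain a b where z: "z = of_rat a + of_rat b * Y" unfolding lin_def by blast
    have "z = of_rat (a + b * u) + of_rat (b * v) * X" by (simp add: z Y algebra_simps of_rat_add of_rat_mult)
    then show "z \<in> lin X" unfolding lin_def by blast
  qed
  show "lin X \<subseteq> lin Y"
  proof
    fix z assume "z \<in> lin X"
    then obtain a b where z: "z = of_rat a + of_rat b * X" unfolding lin_def by blast
    have "z = of_rat (a - b * u / v) + of_rat (b / v) * Y" using v0
      by (simp add: z Y algebra_simps of_rat_add of_rat_mult of_rat_diff of_rat_divide)
    then show "z \<in> lin Y" unfolding lin_def by blast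
  qed
qed

lemma sqrt_nonreal: "k > 0 \<Longrightarrow> \<i> * complex_of_real (sqrt k) \<notin> \<real>"
  by (simp add: complex_is_Real_iff)

lemma sqrt_sq: "k \<ge> 0 \<Longrightarrow> (\<i> * complex_of_real (sqrt k))^2 = - complex_of_real k"
proof -
  assume "k \<ge> 0"
  then have "complex_of_real (sqrt k) * complex_of_real (sqrt k) = complex_of_real k"
    by (simp flip: of_real_mult)
  then show ?thesis by (simp add: power2_eq_square algebra_simps)
qed

lemma qfield_sqrt:
  assumes "k > 0" "complex_of_real k = of_rat \<kappa>"
  shows "qfield (\<i> * complex_of_real (sqrt k)) = lin (\<i> * complex_of_real (sqrt k))"
  apply (rule qfield_eq[of _ 0 \<kappa>])
  using assms sqrt_nonreal[of k] sqrt_sq[of k] by auto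

lemma lin_conv:
  fixes X :: complex
  assumes "Re X = of_rat u" "(Im X)^2 = (of_rat c)^2 * k" "c \<noteq> 0" "k > 0"
  shows "lin X = lin (\<i> * complex_of_real (sqrt k))"
proof -
  have "(Im X)^2 = (of_rat c * sqrt k)^2" using assms by (simp add: power_mult_distrib)
  then have "Im X = of_rat c * sqrt k \<or> Im X = - (of_rat c * sqrt k)" by (simp add: power2_eq_iff)
  then obtain v where v: "Im X = of_rat v * sqrt k" "v \<noteq> 0"
    using assms(3) by (metis mult_minus_left of_rat_minus neg_equal_0_iff_equal)
  have "X = of_rat u + of_rat v * (\<i> * complex_of_real (sqrt k))"
    by (simp add: complex_eq_iff of_rat_complex assms(1) v(1))
  from lin_change[OF this v(2)] show ?thesis .
qed



lemma classify:
  fixes X :: complex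
  assumes iq: "imag_quadratic X" and gen: "spm1_generator X"
  shows "qfield X = qfield (\<i> * of_real (sqrt 2)) \<or>
            qfield X = qfield (\<i> * of_real (sqrt 3)) \<or>
            qfield X = qfield (\<i> * of_real (sqrt 11))"
proof -
  from iq have nr: "X \<notin> \<real>" and "\<exists>P :: rat poly. degree P = 2 \<and> poly (map_poly of_rat P) X = 0"
    unfolding imag_quadratic_def by auto
  then obtain P :: "rat poly" where dP: "degree P = 2" and PX: "poly (map_poly of_rat P) X = 0" by blast
  have ImX: "Im X \<noteq> 0" using nr complex_is_Real_iff by blast
  define c0 c1 c2 where "c0 = coeff P 0" "c1 = coeff P 1" "c2 = coeff P 2"
  have "P \<noteq> 0" using dP by auto
  then have c2: "c2 \<noteq> 0" using dP leading_coeff_0_iff[of P] by (simp add: c0_c1_c2_def)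
  have Pe: "P = pCons c0 (pCons c1 [:c2:])"
    using dP by (auto simp: poly_eq_iff coeff_pCons coeff_eq_0 c0_c1_c2_def numeral_2_eq_2 split: nat.splits)
  have e: "of_rat c0 + X * (of_rat c1 + X * of_rat c2) = (0::complex)"
    using PX by (subst (asm) Pe) (simp add: map_poly_pCons)
  have "of_rat c2 * X^2 = of_rat c2 * X^2 - (of_rat c0 + X * (of_rat c1 + X * of_rat c2))"
    using e by simp
  also have "\<dots> = - of_rat c1 * X - of_rat c0" by (simp add: algebra_simps power2_eq_square)
  finally have "of_rat c2 * X^2 = - of_rat c1 * X - of_rat c0" .
  then have eqr: "X^2 = of_rat (- c1 / c2) * X - of_rat (c0 / c2)"
    using c2 by (simp add: field_simps of_rat_divide of_rat_minus)
  have two: "2 \<in> zring X"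
    unfolding zring_def by (intro CollectI exI[of _ "[:2:]"]) (simp add: map_poly_pCons)
  have U: "\<And>z. z \<in> zring X \<Longrightarrow> \<exists>!p :: int poly. digitp p \<and> poly (map_poly of_int p) X = z"
    using gen unfolding spm1_generator_def digitp_def by blast
  obtain p where p: "digitp p" "poly (map_poly of_int p) X = 2" using U[OF two] by blast
  have dp: "degree p > 0"
  proof (rule ccontr)
    assume "\<not> degree p > 0"
    then have "p = [:coeff p 0:]" using degree_0_id[of p] by simp
    moreover have "poly (map_poly of_int [:coeff p 0:]) X = (of_int (coeff p 0) :: complex)" by (simp add: map_poly_pCons)
    ultimately have "poly (map_poly of_int p) X = of_int (coeff p 0)" by metis
    moreover have "coeff p 0 \<in> {-1,0,1}" using p(1) digitp_def by auto
    ultimately show False using p(2) by auto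
  qed
  define f where "f = [:-2:] + p"
  have lf: "lead_coeff f = 1 \<or> lead_coeff f = -1"
  proof -
    have "lead_coeff f = lead_coeff p" unfolding f_def using dp lead_coeff_add_le[of "[:-2:]" p] by simp
    moreover have "lead_coeff p \<in> {-1,0,1}" using p(1) digitp_def by auto
    moreover have "lead_coeff p \<noteq> 0" using dp by auto
    ultimately show ?thesis by auto
  qed
  have fX: "poly (map_poly of_int f) X = 0"
    unfolding f_def by (simp add: map_poly_add_hom map_poly_pCons p(2))
  have qi: "- c1 / c2 \<in> \<int>" "c0 / c2 \<in> \<int>" using quad_int[OF nr eqr fX lf] by auto
  obtain s where s: "- c1 / c2 = of_int s" using qi(1) by (metis Ints_cases)
  obtain n where n: "c0 / c2 = of_int n" using qi(2) by (metis Ints_cases)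
  note sn = s n
  have eq: "X^2 = of_int s * X - of_int n" using eqr sn by simp
  have res: "Re X ^2 - Im X^2 = of_int s * Re X - of_int n" "2 * Re X * Im X = of_int s * Im X"
    using arg_cong[OF eq, of Re] arg_cong[OF eq, of Im] by (simp_all add: Re_power2 Im_power2)
  have sRe: "of_int s = 2 * Re X" using res(2) ImX by simp
  have "of_int n = of_int s * Re X - Re X ^ 2 + Im X ^ 2" using res(1) by linarith
  then have nRe: "of_int n = Re X ^ 2 + Im X ^ 2" using sRe by (simp add: power2_eq_square)
  have "Im X ^ 2 > 0" using ImX by simp
  moreover have "Re X ^ 2 \<ge> 0" by simp
  ultimately have "real_of_int n > 0" using nRe by linarith
  then have npos: "n > 0" by simp
  have "(of_int (4*n - s^2) :: real) = 4 * of_int n - (of_int s)^2" by simp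
  also have "\<dots> = 4 * Im X ^ 2" using sRe nRe by (simp add: power2_eq_square)
  finally have disc: "(of_int (4*n - s^2) :: real) = 4 * Im X ^ 2" .
  have zX: "zring X = {of_int a + of_int b * X | a b. True}" by (rule zring_eq[OF eq])
  have n12: "n \<noteq> 1 \<and> n \<noteq> 2"
  proof (rule ccontr)
    assume "\<not> (n \<noteq> 1 \<and> n \<noteq> 2)"
    then have n12: "n = 1 \<or> n = 2" by simp
    have "of_int s - X \<in> zring X" unfolding zX by (rule CollectI, rule exI[of _ s], rule exI[of _ "-1"]) simp
    then obtain w where w: "digitp w" "poly (map_poly of_int w) X = of_int s - X" using U by blast
    have one: "1 \<in> zring X" unfolding zX by (rule CollectI, rule exI[of _ 1], rule exI[of _ 0]) simp
    have d1: "digitp [:1:]" unfolding digitp_def by (auto simp: coeff_pCons split: nat.splits)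
    have d2: "digitp (pCons (1 - n) w)" using w(1) n12 unfolding digitp_def by (auto simp: coeff_pCons split: nat.splits)
    have "poly (map_poly of_int (pCons (1 - n) w)) X = of_int (1 - n) + X * (of_int s - X)"
      by (simp add: map_poly_pCons w(2))
    also have "\<dots> = 1" by (simp add: algebra_simps power2_eq_square[symmetric] eq)
    finally have e2: "poly (map_poly of_int (pCons (1 - n) w)) X = 1" .
    have e1: "poly (map_poly of_int [:1:]) X = (1::complex)" by (simp add: map_poly_pCons)
    from U[OF one] d1 d2 e1 e2 have "pCons (1 - n) w = [:1:]" by blast
    then show False using npos by simp
  qed
  obtain d p' where pp: "p = pCons d p'" by (cases p)
  have dd: "d \<in> {-1,0,1}" using p(1) pp unfolding digitp_def by (metis coeff_pCons_0)
  obtain a b where ab: "poly (map_poly of_int p') X = of_int a + of_int b * X" using zring_elem[OF eq] by blast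
  have "2 = of_int d + X * (of_int a + of_int b * X)" using p(2) pp ab by (simp add: map_poly_pCons)
  then have "of_int (2 - d) = X * (of_int a + of_int b * X)" by (metis add_diff_cancel_left' of_int_diff of_int_numeral)
  from divlem[OF nr eq this] have nb: "2 - d = - n * b" .
  have n3: "n = 3"
  proof -
    have ge: "n \<ge> 3" using npos n12 by linarith
    have pos: "n * (-b) \<ge> 1" "n * (-b) \<le> 3" using nb dd by auto
    have "-b \<ge> 1"
    proof (rule ccontr)
      assume "\<not> -b \<ge> 1"
      then have "-b \<le> 0" by simp
      then have "n * (-b) \<le> 0" using npos by (simp add: mult_nonneg_nonpos)
      then show False using pos by simp
    qed
    then have "n \<le> n * (-b)" using npos by (metis mult.right_neutral mult_left_mono less_imp_le)
    then show ?thesis using ge pos by linarith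
  qed
  have s12: "s^2 < 12" using disc n3 \<open>Im X ^ 2 > 0\<close> by (smt (verit) of_int_less_iff of_int_0)
  have sr: "s \<in> {-3,-2,-1,0,1,2,3}"
  proof -
    have "\<bar>s\<bar> < 4"
    proof (rule ccontr)
      assume "\<not> \<bar>s\<bar> < 4"
      then have "4^2 \<le> \<bar>s\<bar>^2" by (intro power_mono) simp_all
      then show False using s12 by simp
    qed
    then show ?thesis by auto
  qed
  have qX: "qfield X = lin X" by (rule qfield_eq[of _ "of_int s" "of_int n"]) (use nr eq in simp_all)
  have ReX: "Re X = of_rat (of_int s / 2)" using sRe by (simp add: of_rat_divide)
  have ImX2: "Im X ^ 2 = (12 - of_int s ^ 2) / 4" using disc n3 by simp
  have q2: "qfield (\<i> * of_real (sqrt 2)) = lin (\<i> * of_real (sqrt 2))" by (rule qfield_sqrt[of _ 2]) simp_all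
  have q3: "qfield (\<i> * of_real (sqrt 3)) = lin (\<i> * of_real (sqrt 3))" by (rule qfield_sqrt[of _ 3]) simp_all
  have q11: "qfield (\<i> * of_real (sqrt 11)) = lin (\<i> * of_real (sqrt 11))" by (rule qfield_sqrt[of _ 11]) simp_all
  from sr show ?thesis
  proof (elim insertE emptyE)
    assume "s = -3"
    then have "lin X = lin (\<i> * of_real (sqrt 3))" using ImX2 by (intro lin_conv[OF ReX, of "1/2"]) (simp_all add: power_divide of_rat_divide)
    then show ?thesis using qX q3 by simp
  next
    assume "s = 3"
    then have "lin X = lin (\<i> * of_real (sqrt 3))" using ImX2 by (intro lin_conv[OF ReX, of "1/2"]) (simp_all add: power_divide of_rat_divide)
    then show ?thesis using qX q3 by simp
  next
    assume "s = 0"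
    then have "lin X = lin (\<i> * of_real (sqrt 3))" using ImX2 by (intro lin_conv[OF ReX, of "1"]) (simp_all add: power_divide of_rat_divide)
    then show ?thesis using qX q3 by simp
  next
    assume "s = -2"
    then have "lin X = lin (\<i> * of_real (sqrt 2))" using ImX2 by (intro lin_conv[OF ReX, of "1"]) (simp_all add: power_divide of_rat_divide)
    then show ?thesis using qX q2 by simp
  next
    assume "s = 2"
    then have "lin X = lin (\<i> * of_real (sqrt 2))" using ImX2 by (intro lin_conv[OF ReX, of "1"]) (simp_all add: power_divide of_rat_divide)
    then show ?thesis using qX q2 by simp
  next
    assume "s = -1"
    then have "lin X = lin (\<i> * of_real (sqrt 11))" using ImX2 by (intro lin_conv[OF ReX, of "1/2"]) (simp_all add: power_divide of_rat_divide)
    then show ?thesis using qX q11 by simp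
  next
    assume "s = 1"
    then have "lin X = lin (\<i> * of_real (sqrt 11))" using ImX2 by (intro lin_conv[OF ReX, of "1/2"]) (simp_all add: power_divide of_rat_divide)
    then show ?thesis using qX q11 by simp
  qed
qed



lemma dvd11: fixes w :: int assumes "11 dvd w^2" shows "11 dvd w"
proof -
  define r where "r = w mod 11"
  define q where "q = w div 11"
  have w: "w = 11 * q + r" unfolding r_def q_def by simp
  have "w^2 = 11*(11 * q^2 + 2 * q * r) + r^2" unfolding w by (simp add: power2_eq_square algebra_simps)
  then have "11 dvd r^2" using assms by (metis dvd_add_right_iff dvd_triv_left)
  moreover have "r \<ge> 0" "r < 11" unfolding r_def by simp_all
  moreover have "r = 0 \<or> r = 1 \<or> r = 2 \<or> r = 3 \<or> r = 4 \<or> r = 5 \<or> r = 6 \<or> r = 7 \<or> r = 8 \<or> r = 9 \<or> r = 10"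
    using \<open>r \<ge> 0\<close> \<open>r < 11\<close> by presburger
  ultimately have "r = 0" by (elim disjE) simp_all
  then show ?thesis using w by simp
qed

lemma rat_sq_int:
  fixes x :: rat
  assumes "x^2 = of_int K"
  shows "\<exists>k. x = of_int k"
proof -
  have "poly (map_poly of_int [:-K, 0, 1:]) x = 0" using assms by (simp add: map_poly_pCons power2_eq_square)
  moreover have "lead_coeff [:-K, 0, 1:] = 1" by simp
  ultimately have "algebraic_int x" by (auto simp: algebraic_int_altdef_ipoly)
  moreover have "x \<in> \<rat>" by (metis Rats_of_rat id_apply of_rat_eq_id)
  ultimately have "x \<in> \<int>" by (rule rational_algebraic_int_is_int)
  then show ?thesis by (auto elim: Ints_cases)
qed

lemma even_sq: "even ((x::int)^2) \<Longrightarrow> even x"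
  by simp

lemma nt2_int:
  fixes w A M :: int
  assumes "w^2 = 8 * M - 2 * A^2"
  shows "even A \<and> 4 dvd w"
proof -
  have "w^2 = 2 * (4 * M - A^2)" using assms by simp
  then have "even (w^2)" by simp
  then have "even w" by simp
  then obtain w1 where w1: "w = 2 * w1" by (auto elim: evenE)
  have "A^2 = 2 * (2 * M - w1^2)" using assms w1 by (simp add: power2_eq_square algebra_simps)
  then have "even (A^2)" by simp
  then have "even A" by simp
  then obtain A1 where A1: "A = 2 * A1" by (auto elim: evenE)
  have "w1^2 = 2 * (M - A1^2)" using assms w1 A1 by (simp add: power2_eq_square algebra_simps)
  then have "even (w1^2)" by simp
  then have "even w1" by simp
  then obtain w2 where "w1 = 2 * w2" by (auto elim: evenE)
  then show ?thesis using w1 \<open>even A\<close> by simp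
qed

lemma nt2:
  fixes u v :: rat
  assumes A: "2 * u = of_int A" and M: "u^2 + 2 * v^2 = of_int M"
  shows "\<exists>a b. u = of_int a \<and> v = of_int b"
proof -
  have "(4 * v)^2 = of_int (8 * M - 2 * A^2)"
  proof -
    have "(4 * v)^2 = 8 * (u^2 + 2 * v^2) - 2 * (2 * u)^2" by (simp add: power2_eq_square algebra_simps)
    then show ?thesis using A M by simp
  qed
  then obtain w where w: "4 * v = of_int w" using rat_sq_int by blast
  have "of_int (w^2) = (of_int (8 * M - 2 * A^2) :: rat)" using w \<open>(4 * v)^2 = _\<close> by simp
  then have "w^2 = 8 * M - 2 * A^2" by (simp only: of_int_eq_iff)
  from nt2_int[OF this] have "even A" "4 dvd w" by auto
  obtain A1 where "A = 2 * A1" using \<open>even A\<close> by (rule evenE)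
  moreover obtain w2 where "w = 4 * w2" using \<open>4 dvd w\<close> by (rule dvdE)
  ultimately have "u = of_int A1" "v = of_int w2" using A w by simp_all
  then show ?thesis by blast
qed

lemma nt11:
  fixes u v :: rat
  assumes A: "2 * u = of_int A" and M: "u^2 + 11 * v^2 = of_int M"
  shows "\<exists>a b. u = of_int a + of_int b / 2 \<and> v = of_int b / 2"
proof -
  have "(22 * v)^2 = of_int (44 * M - 11 * A^2)"
  proof -
    have "(22 * v)^2 = 44 * (u^2 + 11 * v^2) - 11 * (2 * u)^2" by (simp add: power2_eq_square algebra_simps)
    then show ?thesis using A M by simp
  qed
  then obtain w where w: "22 * v = of_int w" using rat_sq_int by blast
  have "of_int (w^2) = (of_int (44 * M - 11 * A^2) :: rat)" using w \<open>(22 * v)^2 = _\<close> by simp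
  then have wi: "w^2 = 44 * M - 11 * A^2" by (simp only: of_int_eq_iff)
  then have "w^2 = 11 * (4 * M - A^2)" by simp
  then have "11 dvd w^2" by simp
  then have "11 dvd w" by (rule dvd11)
  then obtain B where B: "w = 11 * B" by (auto elim: dvdE)
  have "A^2 + 11 * B^2 = 4 * M" using wi B by (simp add: power2_eq_square algebra_simps)
  then have "A^2 + 11 * B^2 = 2 * (2 * M)" by simp
  then have "even (A^2 + 11 * B^2)" by (metis dvd_triv_left)
  then have "even (A - B)" by auto
  then obtain a where a: "A - B = 2 * a" by (rule evenE)
  have v: "v = of_int B / 2" using w B by simp
  have "u = of_int a + of_int B / 2"
  proof -
    have "2 * u = 2 * (of_int a + of_int B / 2)" using A a
      by (simp add: algebra_simps)
    then show ?thesis by simp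
  qed
  with v show ?thesis by blast
qed



lemma Y2sq: "(\<i> * complex_of_real (sqrt 2))^2 = of_int 0 * (\<i> * complex_of_real (sqrt 2)) - of_int 2"
  using sqrt_sq[of 2] by simp

lemma X1gen: "(Y::complex)^2 = -2 \<Longrightarrow> (1 + Y)^2 = of_int 2 * (1 + Y) - 3"
  by (simp add: power2_eq_square algebra_simps)

lemma X1eq: "(1 + \<i> * complex_of_real (sqrt 2))^2 = of_int 2 * (1 + \<i> * complex_of_real (sqrt 2)) - 3"
  by (rule X1gen) (simp add: sqrt_sq)

lemma Y3eq: "(\<i> * complex_of_real (sqrt 3))^2 = of_int 0 * (\<i> * complex_of_real (sqrt 3)) - 3"
  using sqrt_sq[of 3] by simp

lemma Y11sq: "(\<i> * complex_of_real (sqrt 11))^2 = - 11"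
  using sqrt_sq[of 11] by simp

lemma Wgen: "(Y::complex)^2 = -11 \<Longrightarrow> ((1 + Y) / 2)^2 = of_int 1 * ((1 + Y) / 2) - 3"
  by (simp add: power2_eq_square field_simps)

lemma Weq: "((1 + \<i> * complex_of_real (sqrt 11)) / 2)^2 = of_int 1 * ((1 + \<i> * complex_of_real (sqrt 11)) / 2) - 3"
  by (rule Wgen) (rule Y11sq)

lemma nr_lin:
  assumes "k > 0" "v \<noteq> 0"
  shows "of_rat u + of_rat v * (\<i> * complex_of_real (sqrt k)) \<notin> \<real>"
  using assms by (simp add: complex_is_Real_iff of_rat_complex)

lemma ring2: "zring (\<i> * of_real (sqrt 2)) = {z \<in> qfield (\<i> * of_real (sqrt 2)). algebraic_int z}"
proof -
  define Y where "Y = \<i> * complex_of_real (sqrt 2)"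
  have Ysq: "Y^2 = - 2" unfolding Y_def using sqrt_sq[of 2] by simp
  have zY: "zring Y = {of_int a + of_int b * Y | a b. True}" unfolding Y_def by (rule zring_eq[OF Y2sq])
  have qY: "qfield Y = lin Y" unfolding Y_def by (rule qfield_sqrt[of _ 2]) simp_all
  have "zring Y = {z \<in> qfield Y. algebraic_int z}"
  proof
    show "zring Y \<subseteq> {z \<in> qfield Y. algebraic_int z}"
    proof
      fix z assume "z \<in> zring Y"
      then obtain a b where z: "z = of_int a + of_int b * Y" using zY by blast
      have "z = of_rat (of_int a) + of_rat (of_int b) * Y" using z by simp
      then have "z \<in> qfield Y" unfolding qY lin_def by blast
      moreover have "algebraic_int z"
      proof -
        have "poly (map_poly of_int [:a^2 + 2 * b^2, -2 * a, 1:]) z = (z - of_int a)^2 + 2 * of_int b ^ 2"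
          by (simp add: map_poly_pCons power2_eq_square algebra_simps)
        also have "\<dots> = 0" by (simp add: z power_mult_distrib Ysq)
        finally show ?thesis unfolding algebraic_int_altdef_ipoly
          by (intro exI[of _ "[:a^2 + 2 * b^2, -2 * a, 1:]"]) simp
      qed
      ultimately show "z \<in> {z \<in> qfield Y. algebraic_int z}" by blast
    qed
    show "{z \<in> qfield Y. algebraic_int z} \<subseteq> zring Y"
    proof
      fix z assume "z \<in> {z \<in> qfield Y. algebraic_int z}"
      then have zq: "z \<in> lin Y" and ai: "algebraic_int z" using qY by auto
      then obtain u v where z: "z = of_rat u + of_rat v * Y" unfolding lin_def by blast
      show "z \<in> zring Y"
      proof (cases "v = 0")
        case True
        then have "z \<in> \<rat>" using z by simp
        from rational_algebraic_int_is_int[OF ai this] obtain m where "z = of_int m" by (auto elim: Ints_cases)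
        then have "z = of_int m + of_int 0 * Y" by simp
        then show ?thesis using zY by blast
      next
        case False
        have nr: "z \<notin> \<real>" unfolding z Y_def using False by (intro nr_lin) simp_all
        have eqz: "z^2 = of_rat (2 * u) * z - of_rat (u^2 + 2 * v^2)"
        proof -
          have "z^2 - of_rat (2 * u) * z + of_rat (u^2 + 2 * v^2) = (z - of_rat u)^2 + 2 * (of_rat v)^2"
            by (simp add: power2_eq_square algebra_simps of_rat_add of_rat_mult)
          also have "\<dots> = 0" by (simp add: z power_mult_distrib Ysq)
          finally show ?thesis by (simp add: algebra_simps)
        qed
        obtain f where f: "poly (map_poly of_int f) z = 0" "lead_coeff f = 1"
          using ai unfolding algebraic_int_altdef_ipoly by blast
        from quad_int[OF nr eqz f(1)] f(2) have "2 * u \<in> \<int>" "u^2 + 2 * v^2 \<in> \<int>" by auto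
        then obtain A M where "2 * u = of_int A" "u^2 + 2 * v^2 = of_int M" by (auto elim!: Ints_cases)
        from nt2[OF this] obtain a b where "u = of_int a" "v = of_int b" by blast
        then have "z = of_int a + of_int b * Y" using z by simp
        then show ?thesis using zY by blast
      qed
    qed
  qed
  then show ?thesis unfolding Y_def .
qed


lemma alg_W:
  fixes W :: complex and a b :: int
  assumes "W^2 = W - 3"
  shows "poly (map_poly of_int [:a^2 + a * b + 3 * b^2, - (2 * a + b), 1:]) (of_int a + of_int b * W) = 0"
proof -
  have "poly (map_poly of_int [:a^2 + a * b + 3 * b^2, - (2 * a + b), 1:]) (of_int a + of_int b * W)
     = of_int b ^ 2 * (W^2 - W + 3)"
    by (simp add: map_poly_pCons power2_eq_square algebra_simps)
  also have "\<dots> = 0" using assms by simp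
  finally show ?thesis .
qed

lemma ring11: "zring ((1 + \<i> * of_real (sqrt 11)) / 2) = {z \<in> qfield (\<i> * of_real (sqrt 11)). algebraic_int z}"
proof -
  define Y where "Y = \<i> * complex_of_real (sqrt 11)"
  define W where "W = (1 + Y) / 2"
  have Ysq: "Y^2 = - 11" unfolding Y_def by (rule Y11sq)
  have Weq': "W^2 = of_int 1 * W - of_int 3" unfolding W_def Y_def using Weq by simp
  have Wsq: "W^2 = W - 3" using Weq' by simp
  have zW: "zring W = {of_int a + of_int b * W | a b. True}" by (rule zring_eq[OF Weq'])
  have qY: "qfield Y = lin Y" unfolding Y_def by (rule qfield_sqrt[of _ 11]) simp_all
  have "zring W = {z \<in> qfield Y. algebraic_int z}"
  proof
    show "zring W \<subseteq> {z \<in> qfield Y. algebraic_int z}"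
    proof
      fix z assume "z \<in> zring W"
      then obtain a b where z: "z = of_int a + of_int b * W" using zW by blast
      have "z = of_rat (of_int a + of_int b / 2) + of_rat (of_int b / 2) * Y" using z unfolding W_def
        by (simp add: of_rat_add of_rat_divide of_rat_mult field_simps)
      then have "z \<in> qfield Y" unfolding qY lin_def by blast
      moreover have "algebraic_int z" unfolding algebraic_int_altdef_ipoly
        by (rule exI[of _ "[:a^2 + a * b + 3 * b^2, - (2 * a + b), 1:]"]) (use alg_W[OF Wsq, of a b] in \<open>simp add: z\<close>)
      ultimately show "z \<in> {z \<in> qfield Y. algebraic_int z}" by blast
    qed
    show "{z \<in> qfield Y. algebraic_int z} \<subseteq> zring W"
    proof
      fix z assume "z \<in> {z \<in> qfield Y. algebraic_int z}"
      then have zq: "z \<in> lin Y" and ai: "algebraic_int z" using qY by auto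
      then obtain u v where z: "z = of_rat u + of_rat v * Y" unfolding lin_def by blast
      show "z \<in> zring W"
      proof (cases "v = 0")
        case True
        then have "z \<in> \<rat>" using z by simp
        from rational_algebraic_int_is_int[OF ai this] obtain m where "z = of_int m" by (auto elim: Ints_cases)
        then have "z = of_int m + of_int 0 * W" by simp
        then show ?thesis using zW by blast
      next
        case False
        have nr: "z \<notin> \<real>" unfolding z Y_def using False by (intro nr_lin) simp_all
        have eqz: "z^2 = of_rat (2 * u) * z - of_rat (u^2 + 11 * v^2)"
        proof -
          have "z^2 - of_rat (2 * u) * z + of_rat (u^2 + 11 * v^2) = (z - of_rat u)^2 + 11 * (of_rat v)^2"
            by (simp add: power2_eq_square algebra_simps of_rat_add of_rat_mult)
          also have "\<dots> = 0" by (simp add: z power_mult_distrib Ysq)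
          finally show ?thesis by (simp add: algebra_simps)
        qed
        obtain f where f: "poly (map_poly of_int f) z = 0" "lead_coeff f = 1"
          using ai unfolding algebraic_int_altdef_ipoly by blast
        from quad_int[OF nr eqz f(1)] f(2) have "2 * u \<in> \<int>" "u^2 + 11 * v^2 \<in> \<int>" by auto
        then obtain A M where "2 * u = of_int A" "u^2 + 11 * v^2 = of_int M" by (auto elim!: Ints_cases)
        from nt11[OF this] obtain a b where ab: "u = of_int a + of_int b / 2" "v = of_int b / 2" by blast
        have "z = of_int a + of_int b * W" using z ab unfolding W_def
          by (simp add: of_rat_add of_rat_divide of_rat_mult field_simps)
        then show ?thesis using zW by blast
      qed
    qed
  qed
  then show ?thesis unfolding W_def Y_def .
qed

theorem proposition6p5:
  shows "(\<forall>X :: complex. imag_quadratic X \<and> spm1_generator X \<longrightarrow>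
            qfield X = qfield (\<i> * of_real (sqrt 2)) \<or>
            qfield X = qfield (\<i> * of_real (sqrt 3)) \<or>
            qfield X = qfield (\<i> * of_real (sqrt 11)))
       \<and> spm1_generator (1 + \<i> * of_real (sqrt 2))
       \<and> zring (1 + \<i> * of_real (sqrt 2)) = zring (\<i> * of_real (sqrt 2))
       \<and> zring (\<i> * of_real (sqrt 2)) = {z \<in> qfield (\<i> * of_real (sqrt 2)). algebraic_int z}
       \<and> spm1_generator (\<i> * of_real (sqrt 3))
       \<and> spm1_generator ((1 + \<i> * of_real (sqrt 11)) / 2)
       \<and> zring ((1 + \<i> * of_real (sqrt 11)) / 2) = {z \<in> qfield (\<i> * of_real (sqrt 11)). algebraic_int z}"
proof (intro conjI allI impI)
  fix X :: complex assume "imag_quadratic X \<and> spm1_generator X"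
  then show "qfield X = qfield (\<i> * of_real (sqrt 2)) \<or>
            qfield X = qfield (\<i> * of_real (sqrt 3)) \<or>
            qfield X = qfield (\<i> * of_real (sqrt 11))" using classify by blast
next
  show "spm1_generator (1 + \<i> * of_real (sqrt 2))"
    by (rule spm1_of[OF _ X1eq]) (simp_all add: complex_is_Real_iff)
next
  show "spm1_generator (\<i> * of_real (sqrt 3))"
    by (rule spm1_of[OF _ Y3eq]) (simp_all add: complex_is_Real_iff)
next
  show "spm1_generator ((1 + \<i> * of_real (sqrt 11)) / 2)"
    by (rule spm1_of[OF _ Weq]) (simp_all add: complex_is_Real_iff)
next
  show "zring (\<i> * of_real (sqrt 2)) = {z \<in> qfield (\<i> * of_real (sqrt 2)). algebraic_int z}" by (rule ring2)
next
  show "zring ((1 + \<i> * of_real (sqrt 11)) / 2) = {z \<in> qfield (\<i> * of_real (sqrt 11)). algebraic_int z}" by (rule ring11)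
next
  define Y where "Y = \<i> * complex_of_real (sqrt 2)"
  have e1: "(1 + Y)^2 = of_int 2 * (1 + Y) - of_int 3" unfolding Y_def using X1eq by simp
  have z1: "zring (1 + Y) = {of_int a + of_int b * (1 + Y) | a b. True}" by (rule zring_eq[OF e1])
  have z2: "zring Y = {of_int a + of_int b * Y | a b. True}" unfolding Y_def by (rule zring_eq[OF Y2sq])
  have "zring (1 + Y) = zring Y"
  proof
    show "zring (1 + Y) \<subseteq> zring Y"
    proof
      fix z assume "z \<in> zring (1 + Y)"
      then obtain a b where "z = of_int a + of_int b * (1 + Y)" using z1 by blast
      then have "z = of_int (a + b) + of_int b * Y" by (simp add: algebra_simps)
      then show "z \<in> zring Y" using z2 by blast
    qed
    show "zring Y \<subseteq> zring (1 + Y)"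
    proof
      fix z assume "z \<in> zring Y"
      then obtain a b where "z = of_int a + of_int b * Y" using z2 by blast
      then have "z = of_int (a - b) + of_int b * (1 + Y)" by (simp add: algebra_simps)
      then show "z \<in> zring (1 + Y)" using z1 by blast
    qed
  qed
  then show "zring (1 + \<i> * of_real (sqrt 2)) = zring (\<i> * of_real (sqrt 2))" unfolding Y_def .
qed

end
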